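(* For every $F>0$ and every $v\in\mathcal U_0$, $$(E^{\rm ecc})'(Fx;v)=0,$$ where $E^{\rm ecc}(y)=\sum_{b\in\mathcal B,\ b\not\subset\Omega_c}e_b(y)+\sum_{b\in\mathcal B,\ b\subset\Omega_c}c_b(y)$.
   Context: One-dimensional setting. Fix integers $N\ge 1$, $R\ge 1$. Let $\Omega=(-N-R,N+R)$, $\Omega_c=(0,N)$, $\Omega_a=\Omega\setminus[0,N]$, $\mathcal I=\Omega\cap\mathbb Z$, $\mathcal I_a=\Omega_a\cap\mathbb Z$, $\mathcal I_D=\{i\in\mathbb Z: N\le |i|<N+R\}$. Let $\mathcal U$ be the set of real-valued functions $y$ on $\mathcal I_a\cup[0,N]$ whose restriction to $(0,N)$ lies in $W^{1,\infty}(0,N)$ (identified with its continuous representative on $[0,N]$); write $y_i=y(i)$. Let $\mathcal U_0=\{u\in\mathcal U: u_i=0 \text{ for all } i\in\mathcal I_D\}$. For $F\in\mathbb R$, $Fx$ denotes the element $y\in\mathcal U$ with $y(x)=Fx$. Let $\varphi:\mathbb R\to\mathbb R$ be continuously differentiable. A bond $(i,i+r)$ ($i\in\mathbb Z$, $r\ge1$) is the open interval from $i$ to $i+r$; $\mathcal B=\{(i,i+r): 1\le r\le R,\ i\in\mathcal I,\ i+r\in\mathcal I\}$. Exact contribution of $b=(i,i+r)$: $e_b(y)=\varphi(y_{i+r}-y_i)$. Continuum contribution: $c_b(y)=\frac1r\int_{b\cap\Omega_c}\varphi(r\,y'(x))\,dx$. For a functional $G$ on $\mathcal U$, $G'(y;v)=\frac{d}{dt}G(y+tv)\big|_{t=0}$.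 *)

theory Defs
  imports "HOL-Analysis.Analysis"
begin

definition Omega_c :: "nat \<Rightarrow> real set" where
  "Omega_c N = {0<..<real N}"

definition sites :: "nat \<Rightarrow> nat \<Rightarrow> int set" where
  "sites N R = {i::int. \<bar>i\<bar> < int N + int R}"

definition dirichlet_sites :: "nat \<Rightarrow> nat \<Rightarrow> int set" where
  "dirichlet_sites N R = {i::int. int N \<le> \<bar>i\<bar> \<and> \<bar>i\<bar> < int N + int R}"

text \<open>A bond (i,i+r) is encoded by the pair (i,r); it is the open interval from i to i+r.\<close>
definition bond_set :: "int \<times> nat \<Rightarrow> real set" where
  "bond_set b = {real_of_int (fst b)<..<real_of_int (fst b) + real (snd b)}"

definition bonds :: "nat \<Rightarrow> nat \<Rightarrow> (int \<times> nat) set" where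
  "bonds N R = {(i, r). 1 \<le> r \<and> r \<le> R \<and> i \<in> sites N R \<and> i + int r \<in> sites N R}"

text \<open>Admissible deformations U: functions on I_a \<union> [0,N] (represented as total
  functions real => real, of which only those values matter) whose restriction to (0,N)
  is W^{1,infinity}, i.e. (continuous representative) Lipschitz on [0,N].\<close>
definition adm :: "nat \<Rightarrow> (real \<Rightarrow> real) set" where
  "adm N = {y. \<exists>L. L-lipschitz_on {0..real N} y}"

definition adm0 :: "nat \<Rightarrow> nat \<Rightarrow> (real \<Rightarrow> real) set" where
  "adm0 N R = {u \<in> adm N. \<forall>i \<in> dirichlet_sites N R. u (real_of_int i) = 0}"

definition e_bond :: "(real \<Rightarrow> real) \<Rightarrow> (real \<Rightarrow> real) \<Rightarrow> int \<times> nat \<Rightarrow> real" where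
  "e_bond \<phi> y b = \<phi> (y (real_of_int (fst b) + real (snd b)) - y (real_of_int (fst b)))"

text \<open>Continuum contribution c_b(y) = 1/r \<integral>_{b \<inter> Omega_c} phi(r y'(x)) dx
  (y' the a.e. derivative of the Lipschitz function y).\<close>
definition c_bond :: "(real \<Rightarrow> real) \<Rightarrow> nat \<Rightarrow> (real \<Rightarrow> real) \<Rightarrow> int \<times> nat \<Rightarrow> real" where
  "c_bond \<phi> N y b = (1 / real (snd b)) *
     (LINT x : bond_set b \<inter> Omega_c N | lborel. \<phi> (real (snd b) * deriv y x))"

definition E_ecc :: "(real \<Rightarrow> real) \<Rightarrow> nat \<Rightarrow> nat \<Rightarrow> (real \<Rightarrow> real) \<Rightarrow> real" where
  "E_ecc \<phi> N R y =
     (\<Sum>b \<in> {b \<in> bonds N R. \<not> bond_set b \<subseteq> Omega_c N}. e_bond \<phi> y b)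
   + (\<Sum>b \<in> {b \<in> bonds N R. bond_set b \<subseteq> Omega_c N}. c_bond \<phi> N y b)"

end

theory Submission
  imports Defs
begin

definition RQ :: "(real\<Rightarrow>real) \<Rightarrow> real \<Rightarrow> real \<Rightarrow> real" where
  "RQ f x h = (f (x + h) - f x) / h"
definition LQ :: "(real\<Rightarrow>real) \<Rightarrow> real \<Rightarrow> real \<Rightarrow> real" where
  "LQ f x h = (f x - f (x - h)) / h"
definition freq0 :: "(real \<Rightarrow> bool) \<Rightarrow> bool" where
  "freq0 P \<longleftrightarrow> (\<forall>d>0. \<exists>h. 0 < h \<and> h < d \<and> P h)"

definition E1 :: "(real\<Rightarrow>real) \<Rightarrow> real \<Rightarrow> real \<Rightarrow> real set" where
  "E1 f p q = {x. freq0 (\<lambda>h. LQ f x h < p) \<and> freq0 (\<lambda>h. q < RQ f x h)}"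
definition E2 :: "(real\<Rightarrow>real) \<Rightarrow> real \<Rightarrow> real \<Rightarrow> real set" where
  "E2 f p q = {x. freq0 (\<lambda>h. RQ f x h < p) \<and> freq0 (\<lambda>h. q < LQ f x h)}"

lemma freq0_iff: "freq0 P \<longleftrightarrow> (\<exists>\<^sub>F h in at_right 0. P h)"
  unfolding freq0_def frequently_def eventually_at_right_field by auto

lemma RQ_bound:
  assumes "K-lipschitz_on UNIV f" "h > 0"
  shows "\<bar>RQ f x h\<bar> \<le> K"
proof -
  have "dist (f (x+h)) (f x) \<le> K * dist (x+h) x"
    using assms(1) unfolding lipschitz_on_def by blast
  then have "\<bar>f (x+h) - f x\<bar> \<le> K * h" using assms(2) by (simp add: dist_real_def)
  then show ?thesis using assms(2) by (simp add: RQ_def abs_divide pos_divide_le_eq)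
qed

lemma LQ_bound:
  assumes "K-lipschitz_on UNIV f" "h > 0"
  shows "\<bar>LQ f x h\<bar> \<le> K"
proof -
  have "dist (f x) (f (x-h)) \<le> K * dist x (x-h)"
    using assms(1) unfolding lipschitz_on_def by blast
  then have "\<bar>f x - f (x-h)\<bar> \<le> K * h" using assms(2) by (simp add: dist_real_def)
  then show ?thesis using assms(2) by (simp add: LQ_def abs_divide pos_divide_le_eq)
qed

lemma freq_of_lt_Liminf:
  fixes X :: "real \<Rightarrow> real"
  assumes "Liminf F (\<lambda>h. ereal (X h)) < ereal p"
  shows "\<exists>\<^sub>F h in F. X h < p"
proof (rule ccontr)
  assume "\<not> (\<exists>\<^sub>F h in F. X h < p)"
  then have "\<forall>\<^sub>F h in F. ereal p \<le> ereal (X h)" by (simp add: not_frequently not_less)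
  then have "ereal p \<le> Liminf F (\<lambda>h. ereal (X h))" by (rule Liminf_bounded)
  with assms show False by (meson leD)
qed

lemma freq_of_gt_Limsup:
  fixes X :: "real \<Rightarrow> real"
  assumes "ereal q < Limsup F (\<lambda>h. ereal (X h))"
  shows "\<exists>\<^sub>F h in F. q < X h"
proof (rule ccontr)
  assume "\<not> (\<exists>\<^sub>F h in F. q < X h)"
  then have "\<forall>\<^sub>F h in F. ereal (X h) \<le> ereal q" by (simp add: not_frequently not_less)
  then have "Limsup F (\<lambda>h. ereal (X h)) \<le> ereal q" by (rule Limsup_bounded)
  with assms show False by (meson leD)
qed

lemma ereal_rat_between:
  fixes a b :: ereal assumes "a < b"
  obtains p q :: real where "p \<in> \<rat>" "q \<in> \<rat>" "a < ereal p" "p < q" "ereal q < b"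
proof -
  obtain r where r: "a < ereal r" "ereal r < b" using ereal_dense2[OF assms] by blast
  obtain s where s: "ereal r < ereal s" "ereal s < b" using ereal_dense2[OF r(2)] by blast
  obtain p where p: "p \<in> \<rat>" "r < p" "p < s" using Rats_dense_in_real s(1) by auto
  obtain q where q: "q \<in> \<rat>" "p < q" "q < s" using Rats_dense_in_real p(3) by auto
  show ?thesis
  proof (rule that[OF p(1) q(1)])
    show "a < ereal p" using r(1) p(2) by (meson ereal_less_eq(3) less_imp_le order_less_le_trans)
    show "p < q" by fact
    have "ereal q < ereal s" using q(3) by simp
    then show "ereal q < b" using s(2) by (rule order.strict_trans)
  qed
qed

lemma at_left_as_right: "at_left (x::real) = filtermap (\<lambda>h. x - h) (at_right 0)"
proof -
  have "at_left x = filtermap uminus (at_right (-x))" by (rule at_left_minus)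
  also have "at_right (-x) = filtermap (\<lambda>h. h + -x) (at_right 0)" by (rule at_right_to_0)
  finally show ?thesis by (simp add: filtermap_filtermap)
qed

lemma diff_lemma:
  assumes lip: "K-lipschitz_on UNIV f"
    and nE: "\<And>p q. p \<in> \<rat> \<Longrightarrow> q \<in> \<rat> \<Longrightarrow> p < q \<Longrightarrow> x \<notin> E1 f p q \<and> x \<notin> E2 f p q"
  shows "f differentiable (at x)"
proof -
  let ?F = "at_right (0::real)"
  let ?R = "\<lambda>h. ereal (RQ f x h)" and ?L = "\<lambda>h. ereal (LQ f x h)"
  define A where "A = Limsup ?F ?R"
  define a where "a = Liminf ?F ?R"
  define B where "B = Limsup ?F ?L"
  define b where "b = Liminf ?F ?L"
  have Fnb: "?F \<noteq> bot" by simp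
  have evR: "\<forall>\<^sub>F h in ?F. \<bar>RQ f x h\<bar> \<le> K" and evL: "\<forall>\<^sub>F h in ?F. \<bar>LQ f x h\<bar> \<le> K"
    using RQ_bound[OF lip] LQ_bound[OF lip] by (auto simp: eventually_at_right_field intro!: exI[of _ 1])
  have aA: "a \<le> A" unfolding a_def A_def by (rule Liminf_le_Limsup[OF Fnb])
  have bB: "b \<le> B" unfolding b_def B_def by (rule Liminf_le_Limsup[OF Fnb])
  have Alo: "A \<le> ereal K" unfolding A_def
    by (rule Limsup_bounded) (use evR in \<open>eventually_elim, auto\<close>)
  have alo: "ereal (-K) \<le> a" unfolding a_def
    by (rule Liminf_bounded) (use evR in \<open>eventually_elim, auto\<close>)
  have Ab: "A \<le> b"
  proof (rule ccontr)
    assume "\<not> A \<le> b"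
    then have "b < A" by simp
    then obtain p q where pq: "p \<in> \<rat>" "q \<in> \<rat>" "b < ereal p" "p < q" "ereal q < A"
      by (rule ereal_rat_between)
    have "\<exists>\<^sub>F h in ?F. LQ f x h < p" using pq(3) unfolding b_def by (rule freq_of_lt_Liminf)
    moreover have "\<exists>\<^sub>F h in ?F. q < RQ f x h" using pq(5) unfolding A_def by (rule freq_of_gt_Limsup)
    ultimately have "x \<in> E1 f p q" by (simp add: E1_def freq0_iff)
    with nE[OF pq(1,2,4)] show False by blast
  qed
  have Ba: "B \<le> a"
  proof (rule ccontr)
    assume "\<not> B \<le> a"
    then have "a < B" by simp
    then obtain p q where pq: "p \<in> \<rat>" "q \<in> \<rat>" "a < ereal p" "p < q" "ereal q < B"
      by (rule ereal_rat_between)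
    have "\<exists>\<^sub>F h in ?F. RQ f x h < p" using pq(3) unfolding a_def by (rule freq_of_lt_Liminf)
    moreover have "\<exists>\<^sub>F h in ?F. q < LQ f x h" using pq(5) unfolding B_def by (rule freq_of_gt_Limsup)
    ultimately have "x \<in> E2 f p q" by (simp add: E2_def freq0_iff)
    with nE[OF pq(1,2,4)] show False by blast
  qed
  have eqs: "a = A" "b = A" "B = A" using aA bB Ab Ba by auto
  obtain l where l: "A = ereal l" using Alo alo aA
    by (cases A) auto
  have "(?R \<longlongrightarrow> ereal l) ?F"
    by (rule Liminf_eq_Limsup[OF Fnb]) (use eqs l in \<open>auto simp: a_def A_def\<close>)
  then have limR: "((\<lambda>h. RQ f x h) \<longlongrightarrow> l) ?F" by (simp add: lim_ereal)
  have "(?L \<longlongrightarrow> ereal l) ?F"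
    by (rule Liminf_eq_Limsup[OF Fnb]) (use eqs l in \<open>auto simp: b_def B_def\<close>)
  then have limL: "((\<lambda>h. LQ f x h) \<longlongrightarrow> l) ?F" by (simp add: lim_ereal)
  have "((\<lambda>y. (f y - f x) / (y - x)) \<longlongrightarrow> l) (at x)"
  proof (rule filterlim_split_at)
    show "((\<lambda>y. (f y - f x) / (y - x)) \<longlongrightarrow> l) (at_right x)"
      unfolding at_right_to_0[of x] filterlim_filtermap
      using limR by (simp add: RQ_def add.commute)
    have "\<And>h. (f (x - h) - f x) / (x - h - x) = LQ f x h"
      by (simp add: LQ_def field_split_simps)
    then show "((\<lambda>y. (f y - f x) / (y - x)) \<longlongrightarrow> l) (at_left x)"
      unfolding at_left_as_right[of x] filterlim_filtermap
      using limL by simp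
  qed
  then have "(f has_field_derivative l) (at x)" by (simp add: has_field_derivative_iff)
  then show ?thesis by (auto simp: differentiable_def has_field_derivative_def)
qed

lemma freq_rat:
  fixes G :: "real \<Rightarrow> real"
  assumes cont: "\<And>h. h > 0 \<Longrightarrow> isCont G h"
  shows "freq0 (\<lambda>h. G h < p) \<longleftrightarrow>
    (\<forall>n::nat. \<exists>h::rat. 0 < h \<and> real_of_rat h < 1 / real (Suc n) \<and> G (real_of_rat h) < p)"
proof
  assume fr: "freq0 (\<lambda>h. G h < p)"
  show "\<forall>n::nat. \<exists>h::rat. 0 < h \<and> real_of_rat h < 1 / real (Suc n) \<and> G (real_of_rat h) < p"
  proof
    fix n :: nat
    obtain h where h: "0 < h" "h < 1 / real (Suc n)" "G h < p"
      using fr unfolding freq0_def by (metis of_nat_0_less_iff zero_less_Suc zero_less_divide_1_iff)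
    have "isCont G h" using cont h(1) by blast
    then have "\<forall>\<^sub>F y in at h. G y < p" using h(3)
      by (metis isCont_def order_tendstoD(2))
    then obtain e where e: "e > 0" "\<And>y. y \<noteq> h \<Longrightarrow> dist y h < e \<Longrightarrow> G y < p"
      unfolding eventually_at by blast
    obtain r where r: "r \<in> \<rat>" "max 0 (h - e) < r" "r < h"
      using Rats_dense_in_real[of "max 0 (h - e)" h] h(1) e(1) by auto
    obtain hq where hq: "r = real_of_rat hq" using r(1) Rats_cases by blast
    have "G r < p" using e(2)[of r] r by (auto simp: dist_real_def)
    moreover have "0 < hq" using r(2) hq by (simp add: zero_less_of_rat_iff[symmetric])
    ultimately show "\<exists>h::rat. 0 < h \<and> real_of_rat h < 1 / real (Suc n) \<and> G (real_of_rat h) < p"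
      using r h(2) hq by (intro exI[of _ hq]) auto
  qed
next
  assume H: "\<forall>n::nat. \<exists>h::rat. 0 < h \<and> real_of_rat h < 1 / real (Suc n) \<and> G (real_of_rat h) < p"
  show "freq0 (\<lambda>h. G h < p)" unfolding freq0_def
  proof (intro allI impI)
    fix d :: real assume "d > 0"
    then obtain n where n: "inverse (real (Suc n)) < d" using reals_Archimedean by blast
    obtain h where h: "0 < h" "real_of_rat h < 1 / real (Suc n)" "G (real_of_rat h) < p" using H by blast
    show "\<exists>h. 0 < h \<and> h < d \<and> G h < p"
      using h n by (intro exI[of _ "real_of_rat h"]) (auto simp: inverse_eq_divide)
  qed
qed

lemma isCont_RQ: assumes "continuous_on UNIV f" "h > 0" shows "isCont (RQ f x) h"
proof -
  have "continuous_on UNIV (\<lambda>h. f (x + h))"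
    by (rule continuous_on_compose2[OF assms(1)]) (auto intro: continuous_intros)
  then have "isCont (\<lambda>h. f (x+h)) h" by (simp add: continuous_on_eq_continuous_at)
  then show ?thesis unfolding RQ_def using assms(2) by (intro continuous_intros) auto
qed

lemma isCont_LQ: assumes "continuous_on UNIV f" "h > 0" shows "isCont (LQ f x) h"
proof -
  have "continuous_on UNIV (\<lambda>h. f (x - h))"
    by (rule continuous_on_compose2[OF assms(1)]) (auto intro: continuous_intros)
  then have "isCont (\<lambda>h. f (x-h)) h" by (simp add: continuous_on_eq_continuous_at)
  then show ?thesis unfolding LQ_def using assms(2) by (intro continuous_intros) auto
qed

lemma E1_rat:
  assumes "continuous_on UNIV f"
  shows "E1 f p q = {x. (\<forall>n::nat. \<exists>h::rat. 0 < h \<and> real_of_rat h < 1 / real (Suc n) \<and> LQ f x (real_of_rat h) < p)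
     \<and> (\<forall>n::nat. \<exists>h::rat. 0 < h \<and> real_of_rat h < 1 / real (Suc n) \<and> - RQ f x (real_of_rat h) < - q)}"
proof -
  have 1: "freq0 (\<lambda>h. LQ f x h < p) = (\<forall>n::nat. \<exists>h::rat. 0 < h \<and> real_of_rat h < 1 / real (Suc n) \<and> LQ f x (real_of_rat h) < p)" for x
    by (rule freq_rat) (rule isCont_LQ[OF assms])
  have 2: "freq0 (\<lambda>h. - RQ f x h < - q) = (\<forall>n::nat. \<exists>h::rat. 0 < h \<and> real_of_rat h < 1 / real (Suc n) \<and> - RQ f x (real_of_rat h) < - q)" for x
    by (rule freq_rat) (intro continuous_intros isCont_RQ[OF assms])
  show ?thesis unfolding E1_def using 1 2 by auto
qed

lemma E2_rat:
  assumes "continuous_on UNIV f"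
  shows "E2 f p q = {x. (\<forall>n::nat. \<exists>h::rat. 0 < h \<and> real_of_rat h < 1 / real (Suc n) \<and> RQ f x (real_of_rat h) < p)
     \<and> (\<forall>n::nat. \<exists>h::rat. 0 < h \<and> real_of_rat h < 1 / real (Suc n) \<and> - LQ f x (real_of_rat h) < - q)}"
proof -
  have 1: "freq0 (\<lambda>h. RQ f x h < p) = (\<forall>n::nat. \<exists>h::rat. 0 < h \<and> real_of_rat h < 1 / real (Suc n) \<and> RQ f x (real_of_rat h) < p)" for x
    by (rule freq_rat) (rule isCont_RQ[OF assms])
  have 2: "freq0 (\<lambda>h. - LQ f x h < - q) = (\<forall>n::nat. \<exists>h::rat. 0 < h \<and> real_of_rat h < 1 / real (Suc n) \<and> - LQ f x (real_of_rat h) < - q)" for x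
    by (rule freq_rat) (intro continuous_intros isCont_LQ[OF assms])
  show ?thesis unfolding E2_def using 1 2 by auto
qed

lemma E1_borel:
  assumes "continuous_on UNIV f"
  shows "E1 f p q \<in> sets borel"
proof -
  have [measurable]: "f \<in> borel_measurable borel" using assms by (rule borel_measurable_continuous_onI)
  show ?thesis unfolding E1_rat[OF assms] RQ_def LQ_def by measurable
qed

lemma E2_borel:
  assumes "continuous_on UNIV f"
  shows "E2 f p q \<in> sets borel"
proof -
  have [measurable]: "f \<in> borel_measurable borel" using assms by (rule borel_measurable_continuous_onI)
  show ?thesis unfolding E2_rat[OF assms] RQ_def LQ_def by measurable
qed

lemma tendsto_freq_lt:
  fixes X :: "real \<Rightarrow> real"
  assumes "(X \<longlongrightarrow> l) F" "\<exists>\<^sub>F h in F. X h < p"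
  shows "l \<le> p"
proof (rule ccontr)
  assume "\<not> l \<le> p"
  then have "\<forall>\<^sub>F h in F. p < X h" using assms(1) by (simp add: order_tendstoD(1))
  then show False using assms(2) by (simp add: frequently_def eventually_mono)
qed

lemma deriv_RQ_LQ:
  assumes "(f has_field_derivative l) (at x)"
  shows "((\<lambda>h. RQ f x h) \<longlongrightarrow> l) (at_right 0)" "((\<lambda>h. LQ f x h) \<longlongrightarrow> l) (at_right 0)"
proof -
  have lim: "((\<lambda>y. (f y - f x) / (y - x)) \<longlongrightarrow> l) (at x)" using assms by (simp add: has_field_derivative_iff)
  then have "((\<lambda>y. (f y - f x) / (y - x)) \<longlongrightarrow> l) (at_right x)" by (simp add: filterlim_at_split)
  then show "((\<lambda>h. RQ f x h) \<longlongrightarrow> l) (at_right 0)"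
    unfolding at_right_to_0[of x] filterlim_filtermap by (simp add: RQ_def add.commute)
  from lim have "((\<lambda>y. (f y - f x) / (y - x)) \<longlongrightarrow> l) (at_left x)" by (simp add: filterlim_at_split)
  moreover have "\<And>h. (f (x - h) - f x) / (x - h - x) = LQ f x h"
    by (simp add: LQ_def field_split_simps)
  ultimately show "((\<lambda>h. LQ f x h) \<longlongrightarrow> l) (at_right 0)"
    unfolding at_left_as_right[of x] filterlim_filtermap by simp
qed

lemma diff_not_E:
  assumes "f differentiable (at x)" "p < q"
  shows "x \<notin> E1 f p q" "x \<notin> E2 f p q"
proof -
  obtain l where l: "(f has_field_derivative l) (at x)"
    using assms(1) by (auto simp: real_differentiable_def)
  note lims = deriv_RQ_LQ[OF l]
  show "x \<notin> E1 f p q"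
  proof
    assume "x \<in> E1 f p q"
    then have f1: "\<exists>\<^sub>F h in at_right 0. LQ f x h < p" and f2: "\<exists>\<^sub>F h in at_right 0. - RQ f x h < - q"
      by (auto simp: E1_def freq0_iff)
    have "l \<le> p" by (rule tendsto_freq_lt[OF lims(2) f1])
    moreover have "- l \<le> - q" by (rule tendsto_freq_lt[OF tendsto_minus[OF lims(1)] f2])
    ultimately show False using assms(2) by simp
  qed
  show "x \<notin> E2 f p q"
  proof
    assume "x \<in> E2 f p q"
    then have f1: "\<exists>\<^sub>F h in at_right 0. RQ f x h < p" and f2: "\<exists>\<^sub>F h in at_right 0. - LQ f x h < - q"
      by (auto simp: E2_def freq0_iff)
    have "l \<le> p" by (rule tendsto_freq_lt[OF lims(1) f1])
    moreover have "- l \<le> - q" by (rule tendsto_freq_lt[OF tendsto_minus[OF lims(2)] f2])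
    ultimately show False using assms(2) by simp
  qed
qed

lemma emeasure_lebesgue_Icc: "u \<le> w \<Longrightarrow> emeasure lebesgue {u..w::real} = ennreal (w - u)"
  by (simp add: emeasure_lborel_Icc)

lemma Icc_sets_lebesgue: "{u..w::real} \<in> sets lebesgue" by simp

lemma negligible_countable_set: "countable (S::real set) \<Longrightarrow> negligible S"
proof -
  assume "countable S"
  then have "negligible (\<Union>x\<in>S. {x})" by (intro negligible_countable_Union) auto
  then show ?thesis by simp
qed

lemma vitali_intervals:
  fixes T :: "real set" and P :: "real \<Rightarrow> real \<Rightarrow> bool"
  assumes cov: "\<And>x (d::real). x \<in> T \<Longrightarrow> d > 0 \<Longrightarrow> \<exists>u w. u \<le> x \<and> x \<le> w \<and> u < w \<and> w - u < d \<and> P u w"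
  obtains C where "countable C" "\<And>i. i \<in> C \<Longrightarrow> fst i < snd i \<and> P (fst i) (snd i)"
    "disjoint_family_on (\<lambda>i. {fst i..snd i}) C" "negligible (T - (\<Union>i\<in>C. {fst i..snd i}))"
proof -
  define K where "K = {i::real\<times>real. fst i < snd i \<and> P (fst i) (snd i)}"
  define ra where "ra = (\<lambda>i::real\<times>real. (snd i - fst i) / 2)"
  define ce where "ce = (\<lambda>i::real\<times>real. (fst i + snd i) / 2)"
  have cb: "cball (ce i) (ra i) = {fst i..snd i}" for i
    by (simp add: cball_eq_atLeastAtMost ce_def ra_def field_simps)
  obtain C where C: "countable C" "C \<subseteq> K"
     "pairwise (\<lambda>i j. disjnt (cball (ce i) (ra i)) (cball (ce j) (ra j))) C"
     "negligible(T - (\<Union>i \<in> C. cball (ce i) (ra i)))"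
  proof (rule Vitali_covering_theorem_cballs[of K ra T ce])
    show "\<And>i. i \<in> K \<Longrightarrow> 0 < ra i" by (auto simp: K_def ra_def)
    fix x and d::real assume "x \<in> T" "0 < d"
    then obtain u w where uw: "u \<le> x \<and> x \<le> w \<and> u < w \<and> w - u < d \<and> P u w" using cov by blast
    then have "x \<in> cball (ce (u,w)) (ra (u,w))" unfolding cb by simp
    with uw show "\<exists>i. i \<in> K \<and> x \<in> cball (ce i) (ra i) \<and> ra i < d"
      by (intro exI[of _ "(u,w)"]) (auto simp: K_def ra_def)
  qed
  show ?thesis
  proof (rule that[OF C(1)])
    show "\<And>i. i \<in> C \<Longrightarrow> fst i < snd i \<and> P (fst i) (snd i)" using C(2) by (auto simp: K_def)
    show "disjoint_family_on (\<lambda>i. {fst i..snd i}) C"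
      using C(3) unfolding disjoint_family_on_def pairwise_def disjnt_def cb by blast
    show "negligible (T - (\<Union>i\<in>C. {fst i..snd i}))" using C(4) by (simp add: cb)
  qed
qed

lemma disj_intervals_order:
  fixes u1 w1 u2 w2 :: real
  assumes "u1 < w1" "u2 < w2" "{u1..w1} \<inter> {u2..w2} = {}"
  shows "w1 < u2 \<or> w2 < u1"
proof (rule ccontr)
  assume "\<not> (w1 < u2 \<or> w2 < u1)"
  then have "max u1 u2 \<in> {u1..w1} \<inter> {u2..w2}" using assms(1,2) by auto
  with assms(3) show False by blast
qed

lemma disjoint_image_intervals:
  fixes g :: "real \<Rightarrow> real"
  assumes mono: "strict_mono g" and lt: "\<And>i. i \<in> C \<Longrightarrow> fst i < snd i"
    and dj: "disjoint_family_on (\<lambda>i. {fst i..snd i}) C"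
  shows "disjoint_family_on (\<lambda>i. {g (fst i)..g (snd i)}) C"
  unfolding disjoint_family_on_def
proof (intro ballI impI)
  fix i j assume ij: "i \<in> C" "j \<in> C" "i \<noteq> j"
  then have "{fst i..snd i} \<inter> {fst j..snd j} = {}" using dj by (auto simp: disjoint_family_on_def)
  then have "snd i < fst j \<or> snd j < fst i" using lt ij by (intro disj_intervals_order) auto
  then have "g (snd i) < g (fst j) \<or> g (snd j) < g (fst i)" using mono by (auto simp: strict_mono_less)
  then show "{g (fst i)..g (snd i)} \<inter> {g (fst j)..g (snd j)} = {}" by auto
qed

lemma emeasure_UN_intervals:
  fixes C :: "(real \<times> real) set" and A :: "real \<times> real \<Rightarrow> real set"
  assumes "countable C" "\<And>i. i \<in> C \<Longrightarrow> A i \<in> sets lebesgue" "disjoint_family_on A C"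
  shows "emeasure lebesgue (\<Union>i\<in>C. A i) = (\<integral>\<^sup>+i. emeasure lebesgue (A i) \<partial>count_space C)"
  by (rule emeasure_UN_countable) (use assms in auto)

lemma dini_core:
  fixes g :: "real \<Rightarrow> real"
  assumes cont: "continuous_on UNIV g" and mono: "strict_mono g" and p: "0 \<le> p" "p < q"
  shows "negligible (E1 g p q \<inter> {a<..<b})"
proof -
  define E where "E = E1 g p q \<inter> {a<..<b}"
  have Eb: "E \<in> sets borel" using E1_borel[OF cont] by (simp add: E_def)
  then have EL: "E \<in> sets lebesgue" by simp
  have Elm: "E \<in> lmeasurable"
    by (rule bounded_set_imp_lmeasurable[OF bounded_subset[OF compact_imp_bounded[OF compact_Icc[of a b]]] EL])
      (auto simp: E_def)
  define s where "s = measure lebesgue E"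
  have s0: "s \<ge> 0" by (simp add: s_def)
  have es: "emeasure lebesgue E = ennreal s" using Elm by (simp add: s_def emeasure_eq_measure2)
  have mono_le: "g u \<le> g w" if "u \<le> w" for u w using mono that by (simp add: strict_mono_less_eq)
  have key: "q * s \<le> p * (s + e)" if e: "e > 0" for e
  proof -
    obtain U where U: "open U" "E \<subseteq> U" "U - E \<in> lmeasurable" "emeasure lebesgue (U - E) < ennreal e"
      using sets_lebesgue_outer_open[OF EL e] by metis
    define W where "W = U \<inter> {a<..<b}"
    have Wo: "open W" using U(1) by (simp add: W_def open_Int)
    have EW: "E \<subseteq> W" using U(2) by (auto simp: W_def E_def)
    have Wm: "emeasure lebesgue W \<le> ennreal s + ennreal e"
    proof -
      have "emeasure lebesgue W \<le> emeasure lebesgue (E \<union> (U - E))"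
        by (rule emeasure_mono) (use U EL in \<open>auto simp: W_def\<close>)
      also have "\<dots> \<le> emeasure lebesgue E + emeasure lebesgue (U - E)"
        by (rule emeasure_subadditive) (use U EL in auto)
      also have "\<dots> \<le> ennreal s + ennreal e" using es U(4) by (simp add: add_left_mono less_imp_le)
      finally show ?thesis .
    qed
    have cov1: "\<exists>u w. u \<le> x \<and> x \<le> w \<and> u < w \<and> w - u < d \<and> ({u..w} \<subseteq> W \<and> g w - g u \<le> p * (w - u))"
      if x: "x \<in> E" "d > 0" for x d :: real
    proof -
      obtain \<delta> where \<delta>: "\<delta> > 0" "ball x \<delta> \<subseteq> W" using Wo EW x(1) openE by blast
      from x have "freq0 (\<lambda>h. LQ g x h < p)" by (simp add: E_def E1_def)
      then obtain h where h: "0 < h" "h < min d \<delta>" "LQ g x h < p"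
        unfolding freq0_def using \<delta>(1) x(2) by (meson min_less_iff_conj)
      have "{x - h..x} \<subseteq> ball x \<delta>" using h by (auto simp: dist_real_def)
      moreover have "g x - g (x - h) \<le> p * h"
        using h(1,3) by (simp add: LQ_def pos_divide_less_eq less_imp_le mult.commute)
      ultimately show ?thesis using h \<delta> by (intro exI[of _ "x - h"] exI[of _ x]) auto
    qed
    obtain C1 where C1: "countable C1"
      "\<And>i. i \<in> C1 \<Longrightarrow> fst i < snd i \<and> ({fst i..snd i} \<subseteq> W \<and> g (snd i) - g (fst i) \<le> p * (snd i - fst i))"
      "disjoint_family_on (\<lambda>i. {fst i..snd i}) C1" "negligible (E - (\<Union>i\<in>C1. {fst i..snd i}))"
      by (rule vitali_intervals[of E "\<lambda>u w. {u..w} \<subseteq> W \<and> g w - g u \<le> p * (w - u)", OF cov1]) blast+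
    define V where "V = (\<Union>i\<in>C1. {fst i<..<snd i})"
    have Vo: "open V" by (auto simp: V_def)
    have EV: "negligible (E - V)"
    proof (rule negligible_subset)
      show "negligible ((E - (\<Union>i\<in>C1. {fst i..snd i})) \<union> (fst ` C1 \<union> snd ` C1))"
        using C1(1) by (intro negligible_Un[OF C1(4)] negligible_countable_set) auto
      show "E - V \<subseteq> (E - (\<Union>i\<in>C1. {fst i..snd i})) \<union> (fst ` C1 \<union> snd ` C1)"
        unfolding V_def by force
    qed
    define Y1 where "Y1 = (\<Union>i\<in>C1. {g (fst i)..g (snd i)})"
    have Y1m: "Y1 \<in> sets lebesgue" unfolding Y1_def using C1(1) by (intro sets.countable_UN') auto
    have dj1: "disjoint_family_on (\<lambda>i. {g (fst i)..g (snd i)}) C1"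
      by (rule disjoint_image_intervals[OF mono _ C1(3)]) (use C1(2) in blast)
    have bound1: "emeasure lebesgue Y1 \<le> ennreal p * (ennreal s + ennreal e)"
    proof -
      have "emeasure lebesgue Y1 = (\<integral>\<^sup>+i. emeasure lebesgue {g (fst i)..g (snd i)} \<partial>count_space C1)"
        unfolding Y1_def by (rule emeasure_UN_intervals[OF C1(1) _ dj1]) simp
      also have "\<dots> \<le> (\<integral>\<^sup>+i. ennreal p * emeasure lebesgue {fst i..snd i} \<partial>count_space C1)"
      proof (rule nn_integral_mono)
        fix i assume "i \<in> space (count_space C1)"
        then have i: "i \<in> C1" by simp
        have lt: "fst i < snd i" and le: "g (snd i) - g (fst i) \<le> p * (snd i - fst i)" using C1(2)[OF i] by auto
        have "emeasure lebesgue {g (fst i)..g (snd i)} = ennreal (g (snd i) - g (fst i))"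
          using lt mono_le by (simp add: emeasure_lebesgue_Icc)
        also have "\<dots> \<le> ennreal (p * (snd i - fst i))" using le by (rule ennreal_leI)
        also have "\<dots> = ennreal p * emeasure lebesgue {fst i..snd i}"
          using lt p by (simp add: emeasure_lebesgue_Icc ennreal_mult)
        finally show "emeasure lebesgue {g (fst i)..g (snd i)} \<le> ennreal p * emeasure lebesgue {fst i..snd i}" .
      qed
      also have "\<dots> = ennreal p * (\<integral>\<^sup>+i. emeasure lebesgue {fst i..snd i} \<partial>count_space C1)"
        by (rule nn_integral_cmult) simp
      also have "\<dots> = ennreal p * emeasure lebesgue (\<Union>i\<in>C1. {fst i..snd i})"
        by (simp add: emeasure_UN_intervals[OF C1(1) _ C1(3)])
      also have "\<dots> \<le> ennreal p * emeasure lebesgue W"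
        by (intro mult_left_mono emeasure_mono) (use C1(2) Wo in auto)
      also have "\<dots> \<le> ennreal p * (ennreal s + ennreal e)" using Wm by (rule mult_left_mono) simp
      finally show ?thesis .
    qed
    have cov2: "\<exists>u w. u \<le> y \<and> y \<le> w \<and> u < w \<and> w - u < d \<and> (q * (w - u) \<le> g w - g u \<and> (\<exists>i\<in>C1. fst i < u \<and> w < snd i))"
      if y: "y \<in> E \<inter> V" "d > 0" for y d :: real
    proof -
      obtain i where i: "i \<in> C1" "fst i < y" "y < snd i" using y(1) by (auto simp: V_def)
      from y have "freq0 (\<lambda>h. q < RQ g y h)" by (simp add: E_def E1_def)
      then obtain h where h: "0 < h" "h < min d (snd i - y)" "q < RQ g y h"
        unfolding freq0_def using i y(2) by (metis diff_gt_0_iff_gt min_less_iff_conj)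
      have "q * h \<le> g (y + h) - g y"
        using h(1,3) by (simp add: RQ_def pos_less_divide_eq less_imp_le mult.commute)
      then show ?thesis using h i by (intro exI[of _ y] exI[of _ "y + h"]) auto
    qed
    obtain C2 where C2: "countable C2"
      "\<And>i. i \<in> C2 \<Longrightarrow> fst i < snd i \<and> (q * (snd i - fst i) \<le> g (snd i) - g (fst i) \<and> (\<exists>j\<in>C1. fst j < fst i \<and> snd i < snd j))"
      "disjoint_family_on (\<lambda>i. {fst i..snd i}) C2" "negligible ((E \<inter> V) - (\<Union>i\<in>C2. {fst i..snd i}))"
      by (rule vitali_intervals[of "E \<inter> V" "\<lambda>u w. q * (w - u) \<le> g w - g u \<and> (\<exists>i\<in>C1. fst i < u \<and> w < snd i)", OF cov2]) blast+
    define Y2 where "Y2 = (\<Union>i\<in>C2. {g (fst i)..g (snd i)})"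
    have Y21: "Y2 \<subseteq> Y1"
    proof
      fix z assume "z \<in> Y2"
      then obtain i where i: "i \<in> C2" "z \<in> {g (fst i)..g (snd i)}" by (auto simp: Y2_def)
      then obtain j where j: "j \<in> C1" "fst j < fst i" "snd i < snd j" using C2(2) by blast
      have "g (fst j) \<le> g (fst i)" "g (snd i) \<le> g (snd j)" using j mono_le by auto
      then show "z \<in> Y1" using i j unfolding Y1_def by (intro UN_I[of j]) auto
    qed
    have dj2: "disjoint_family_on (\<lambda>i. {g (fst i)..g (snd i)}) C2"
      by (rule disjoint_image_intervals[OF mono _ C2(3)]) (use C2(2) in blast)
    have bound2: "ennreal q * ennreal s \<le> emeasure lebesgue Y2"
    proof -
      have EVm: "E \<inter> V \<in> sets lebesgue" using EL Vo by auto
      have Um2: "(\<Union>i\<in>C2. {fst i..snd i}) \<in> sets lebesgue" using C2(1) by (intro sets.countable_UN') auto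
      have N2: "(E \<inter> V) - (\<Union>i\<in>C2. {fst i..snd i}) \<in> null_sets lebesgue"
        using C2(4) by (simp add: negligible_iff_null_sets)
      have "ennreal s = emeasure lebesgue ((E \<inter> V) \<union> (E - V))" proof -
        have "(E \<inter> V) \<union> (E - V) = E" by blast
        then show ?thesis using es by simp
      qed
      also have "\<dots> = emeasure lebesgue (E \<inter> V)"
        by (rule emeasure_Un_null_set[OF EVm]) (use EV in \<open>simp add: negligible_iff_null_sets\<close>)
      also have "\<dots> \<le> emeasure lebesgue ((\<Union>i\<in>C2. {fst i..snd i}) \<union> ((E \<inter> V) - (\<Union>i\<in>C2. {fst i..snd i})))"
        by (rule emeasure_mono) (use Um2 N2 EVm in \<open>auto intro: sets.Un null_setsD2\<close>)
      also have "\<dots> = emeasure lebesgue (\<Union>i\<in>C2. {fst i..snd i})"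
        by (rule emeasure_Un_null_set[OF Um2 N2])
      also have "\<dots> = (\<integral>\<^sup>+i. emeasure lebesgue {fst i..snd i} \<partial>count_space C2)"
        by (simp add: emeasure_UN_intervals[OF C2(1) _ C2(3)])
      finally have sle: "ennreal s \<le> (\<integral>\<^sup>+i. emeasure lebesgue {fst i..snd i} \<partial>count_space C2)" .
      have "ennreal q * ennreal s \<le> ennreal q * (\<integral>\<^sup>+i. emeasure lebesgue {fst i..snd i} \<partial>count_space C2)"
        using sle by (rule mult_left_mono) simp
      also have "\<dots> = (\<integral>\<^sup>+i. ennreal q * emeasure lebesgue {fst i..snd i} \<partial>count_space C2)"
        by (rule nn_integral_cmult[symmetric]) simp
      also have "\<dots> \<le> (\<integral>\<^sup>+i. emeasure lebesgue {g (fst i)..g (snd i)} \<partial>count_space C2)"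
      proof (rule nn_integral_mono)
        fix i assume "i \<in> space (count_space C2)"
        then have i: "i \<in> C2" by simp
        have lt: "fst i < snd i" and le: "q * (snd i - fst i) \<le> g (snd i) - g (fst i)" using C2(2)[OF i] by auto
        have "ennreal q * emeasure lebesgue {fst i..snd i} = ennreal (q * (snd i - fst i))"
          using lt p by (simp add: emeasure_lebesgue_Icc ennreal_mult)
        also have "\<dots> \<le> ennreal (g (snd i) - g (fst i))" using le by (rule ennreal_leI)
        also have "\<dots> = emeasure lebesgue {g (fst i)..g (snd i)}"
          using lt mono_le by (simp add: emeasure_lebesgue_Icc)
        finally show "ennreal q * emeasure lebesgue {fst i..snd i} \<le> emeasure lebesgue {g (fst i)..g (snd i)}" .
      qed
      also have "\<dots> = emeasure lebesgue Y2"
        unfolding Y2_def by (rule emeasure_UN_intervals[OF C2(1) _ dj2, symmetric]) simp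
      finally show ?thesis .
    qed
    have "ennreal q * ennreal s \<le> ennreal p * (ennreal s + ennreal e)"
      using bound2 emeasure_mono[OF Y21 Y1m] bound1 by (meson order_trans)
    then have "ennreal (q * s) \<le> ennreal (p * (s + e))"
      using p s0 e by (simp add: ennreal_mult ennreal_plus[symmetric] del: ennreal_plus)
    then show ?thesis using p s0 e by (simp add: ennreal_le_iff)
  qed
  have "q * s \<le> p * s"
  proof (rule ccontr)
    assume "\<not> q * s \<le> p * s"
    then have gt: "q * s - p * s > 0" by simp
    define e where "e = (q * s - p * s) / (p + 1)"
    have e0: "e > 0" using gt p by (simp add: e_def)
    have "p * e < q * s - p * s"
    proof -
      have "p * e = (q * s - p * s) * (p / (p + 1))" using p by (simp add: e_def field_simps)
      also have "\<dots> < (q * s - p * s) * 1" using gt p by (intro mult_strict_left_mono) auto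
      finally show ?thesis by simp
    qed
    with key[OF e0] show False by (simp add: algebra_simps)
  qed
  then have "(q - p) * s \<le> 0" by (simp add: algebra_simps)
  then have "s = 0" using p s0 by (simp add: mult_le_0_iff)
  then have "negligible E" using negligible_iff_measure0[OF Elm] by (simp add: s_def)
  then show ?thesis by (simp add: E_def)
qed

lemma lip_strict_mono:
  assumes "K-lipschitz_on UNIV f"
  shows "strict_mono (\<lambda>x. f x + (K + 1) * x)"
proof (rule strict_monoI)
  fix x y :: real assume xy: "x < y"
  have "dist (f y) (f x) \<le> K * dist y x" using assms unfolding lipschitz_on_def by blast
  then have "f x - f y \<le> K * (y - x)" using xy by (simp add: dist_real_def abs_le_iff)
  then show "f x + (K + 1) * x < f y + (K + 1) * y" using xy by (simp add: algebra_simps)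
qed

lemma lip_cont: "K-lipschitz_on UNIV f \<Longrightarrow> continuous_on UNIV f"
  by (rule lipschitz_on_continuous_on)

lemma E1_shift: "E1 (\<lambda>x. f x + c * x) (p + c) (q + c) = E1 f p q"
proof -
  have "LQ (\<lambda>x. f x + c * x) x h = LQ f x h + c" if "h > 0" for x h
    using that by (simp add: LQ_def field_simps)
  moreover have "RQ (\<lambda>x. f x + c * x) x h = RQ f x h + c" if "h > 0" for x h
    using that by (simp add: RQ_def field_simps)
  ultimately have "(0 < h \<and> h < d \<and> LQ (\<lambda>x. f x + c * x) x h < p + c) \<longleftrightarrow> (0 < h \<and> h < d \<and> LQ f x h < p)"
    "(0 < h \<and> h < d \<and> q + c < RQ (\<lambda>x. f x + c * x) x h) \<longleftrightarrow> (0 < h \<and> h < d \<and> q < RQ f x h)" for x h d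
    by auto
  then show ?thesis unfolding E1_def freq0_def by simp
qed

lemma E1_lip_negligible:
  assumes lip: "K-lipschitz_on UNIV f" and pq: "p < q"
  shows "negligible (E1 f p q)"
proof (cases "p < - K")
  case True
  have "E1 f p q = {}"
  proof (rule ccontr)
    assume "E1 f p q \<noteq> {}"
    then obtain x where "freq0 (\<lambda>h. LQ f x h < p)" by (auto simp: E1_def)
    then obtain h where "0 < h" "LQ f x h < p" unfolding freq0_def by (meson zero_less_one)
    with LQ_bound[OF lip, of h x] True show False by linarith
  qed
  then show ?thesis by simp
next
  case False
  define g where "g = (\<lambda>x. f x + (K + 1) * x)"
  have K0: "K \<ge> 0" using lip by (simp add: lipschitz_on_def)
  have contg: "continuous_on UNIV g" unfolding g_def
    by (intro continuous_intros lip_cont[OF lip])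
  have eq: "E1 f p q = E1 g (p + (K + 1)) (q + (K + 1))" unfolding g_def by (rule E1_shift[symmetric])
  have "negligible (E1 g (p + (K + 1)) (q + (K + 1)) \<inter> {- real n<..<real n})" for n
    by (rule dini_core[OF contg]) (use lip_strict_mono[OF lip] False pq in \<open>auto simp: g_def\<close>)
  then have "negligible (\<Union>n. E1 g (p + (K + 1)) (q + (K + 1)) \<inter> {- real n<..<real n})"
    by (rule negligible_Union_nat)
  moreover have "(\<Union>n. E1 g (p + (K + 1)) (q + (K + 1)) \<inter> {- real n<..<real n}) = E1 g (p + (K + 1)) (q + (K + 1))"
  proof -
    have "\<exists>n. x \<in> {- real n<..<real n}" for x :: real
    proof -
      obtain n where "\<bar>x\<bar> < real n" using reals_Archimedean2 by blast
      then show ?thesis by (intro exI[of _ n]) auto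
    qed
    then show ?thesis by blast
  qed
  ultimately show ?thesis using eq by simp
qed

lemma E2_mirror: "E2 f p q = uminus ` E1 (\<lambda>x. - f (- x)) p q"
proof -
  have LR: "LQ (\<lambda>x. - f (- x)) (- x) h = RQ f x h" for x h
    by (simp add: LQ_def RQ_def algebra_simps)
  have RL: "RQ (\<lambda>x. - f (- x)) (- x) h = LQ f x h" for x h
    by (simp add: LQ_def RQ_def algebra_simps)
  have "x \<in> E2 f p q \<longleftrightarrow> - x \<in> E1 (\<lambda>x. - f (- x)) p q" for x
    unfolding E1_def E2_def by (simp add: LR RL)
  note iff = this
  show ?thesis
  proof (intro equalityI subsetI)
    fix x assume "x \<in> E2 f p q"
    then have "- x \<in> E1 (\<lambda>x. - f (- x)) p q" using iff by blast
    then show "x \<in> uminus ` E1 (\<lambda>x. - f (- x)) p q" by (rule rev_image_eqI) simp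
  next
    fix x assume "x \<in> uminus ` E1 (\<lambda>x. - f (- x)) p q"
    then obtain y where "y \<in> E1 (\<lambda>x. - f (- x)) p q" "x = - y" by auto
    then show "x \<in> E2 f p q" using iff[of x] by simp
  qed
qed

lemma E2_lip_negligible:
  assumes lip: "K-lipschitz_on UNIV f" and pq: "p < q"
  shows "negligible (E2 f p q)"
proof -
  define f' where "f' = (\<lambda>x. - f (- x))"
  have lip': "K-lipschitz_on UNIV f'"
    unfolding lipschitz_on_def f'_def
  proof (intro conjI ballI)
    show "0 \<le> K" using lip by (simp add: lipschitz_on_def)
    fix x y :: real
    have "dist (f (-x)) (f (-y)) \<le> K * dist (-x) (-y)" using lip by (auto simp: lipschitz_on_def)
    then show "dist (- f (- x)) (- f (- y)) \<le> K * dist x y" by (simp add: dist_minus)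
  qed
  have n1: "negligible (E1 f' p q)" by (rule E1_lip_negligible[OF lip' pq])
  have b1: "E1 f' p q \<in> sets lebesgue" using E1_borel[OF lip_cont[OF lip']] by simp
  have "emeasure lebesgue (E1 f' p q) = 0" using n1 b1 by (simp add: negligible_iff_emeasure0)
  then have "emeasure lebesgue ((\<lambda>x. (-1) *\<^sub>R x + 0) ` E1 f' p q) = 0"
    by (simp only: emeasure_lebesgue_affine) simp
  then have "emeasure lebesgue (E2 f p q) = 0" by (simp add: E2_mirror f'_def)
  moreover have "E2 f p q \<in> sets lebesgue" using E2_borel[OF lip_cont[OF lip]] by simp
  ultimately show ?thesis by (simp add: negligible_iff_emeasure0)
qed

definition ND :: "(real \<Rightarrow> real) \<Rightarrow> real set" where
  "ND f = {x. \<not> f differentiable (at x)}"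

lemma ND_eq:
  assumes lip: "K-lipschitz_on UNIV f"
  shows "ND f = (\<Union>pq \<in> {pq::rat\<times>rat. fst pq < snd pq}.
     E1 f (real_of_rat (fst pq)) (real_of_rat (snd pq)) \<union> E2 f (real_of_rat (fst pq)) (real_of_rat (snd pq)))"
proof (intro equalityI subsetI)
  fix x assume "x \<in> ND f"
  then have nd: "\<not> f differentiable (at x)" by (simp add: ND_def)
  then obtain p q where pq: "p \<in> \<rat>" "q \<in> \<rat>" "p < q" "x \<in> E1 f p q \<or> x \<in> E2 f p q"
    using diff_lemma[OF lip, of x] by blast
  obtain p' q' where "p = real_of_rat p'" "q = real_of_rat q'" using pq(1,2) Rats_cases by metis
  with pq show "x \<in> (\<Union>pq \<in> {pq::rat\<times>rat. fst pq < snd pq}.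
     E1 f (real_of_rat (fst pq)) (real_of_rat (snd pq)) \<union> E2 f (real_of_rat (fst pq)) (real_of_rat (snd pq)))"
    by (intro UN_I[of "(p', q')"]) (auto simp: of_rat_less)
next
  fix x assume "x \<in> (\<Union>pq \<in> {pq::rat\<times>rat. fst pq < snd pq}.
     E1 f (real_of_rat (fst pq)) (real_of_rat (snd pq)) \<union> E2 f (real_of_rat (fst pq)) (real_of_rat (snd pq)))"
  then obtain p q :: rat where "p < q" "x \<in> E1 f (real_of_rat p) (real_of_rat q) \<or> x \<in> E2 f (real_of_rat p) (real_of_rat q)"
    by auto
  then show "x \<in> ND f" using diff_not_E[of f x "real_of_rat p" "real_of_rat q"]
    by (auto simp: ND_def of_rat_less)
qed

lemma ND_borel:
  assumes lip: "K-lipschitz_on UNIV f"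
  shows "ND f \<in> sets borel"
  unfolding ND_eq[OF lip]
  by (intro sets.countable_UN' sets.Un E1_borel E2_borel lip_cont[OF lip] image_subsetI) auto

lemma ND_negligible:
  assumes lip: "K-lipschitz_on UNIV f"
  shows "negligible (ND f)"
  unfolding ND_eq[OF lip]
proof (rule negligible_countable_Union)
  show "countable ((\<lambda>pq. E1 f (real_of_rat (fst pq)) (real_of_rat (snd pq)) \<union> E2 f (real_of_rat (fst pq)) (real_of_rat (snd pq))) ` {pq::rat\<times>rat. fst pq < snd pq})"
    by auto
qed (auto intro!: negligible_Un E1_lip_negligible[OF lip] E2_lip_negligible[OF lip] simp: of_rat_less)

lemma ND_null_lborel:
  assumes lip: "K-lipschitz_on UNIV f"
  shows "ND f \<in> null_sets lborel"
proof -
  have "ND f \<in> null_sets lebesgue" using ND_negligible[OF lip] by (simp add: negligible_iff_null_sets)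
  then have "emeasure lebesgue (ND f) = 0" by auto
  moreover have "ND f \<in> sets lborel" using ND_borel[OF lip] by simp
  ultimately show ?thesis by (simp add: null_sets_def)
qed

definition c0 :: real where "c0 = (SOME D::real. False)"

lemma deriv_nondiff: "\<not> (f::real\<Rightarrow>real) differentiable (at x) \<Longrightarrow> deriv f x = c0"
proof -
  assume nd: "\<not> f differentiable (at x)"
  have "(\<lambda>D. (f has_field_derivative D) (at x)) = (\<lambda>D. False)"
    using nd by (auto simp: real_differentiable_def)
  then show ?thesis unfolding deriv_def c0_def by simp
qed

lemma hseq: "filterlim (\<lambda>n. inverse (real (Suc n))) (at_right 0) sequentially"
  by (rule tendsto_imp_filterlim_at_right[OF LIMSEQ_inverse_real_of_nat]) auto

lemma deriv_RQ_lim: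
  fixes f :: "real \<Rightarrow> real" and a b K :: real
  assumes "f differentiable (at x)"
  shows "(\<lambda>n. RQ f x (inverse (real (Suc n)))) \<longlonglongrightarrow> deriv f x"
proof -
  have "(f has_field_derivative deriv f x) (at x)" using assms DERIV_deriv_iff_real_differentiable by blast
  from deriv_RQ_LQ(1)[OF this] show ?thesis by (rule filterlim_compose[OF _ hseq])
qed

lemma deriv_borel:
  fixes f :: "real \<Rightarrow> real" and a b K :: real
  assumes lip: "K-lipschitz_on UNIV f"
  shows "deriv f \<in> borel_measurable borel"
proof (rule borel_measurable_LIMSEQ_real)
  define u where "u = (\<lambda>n x. if x \<in> ND f then c0 else RQ f x (inverse (real (Suc n))))"
  show "(\<lambda>n. u n x) \<longlonglongrightarrow> deriv f x" for x
  proof (cases "x \<in> ND f")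
    case True
    then show ?thesis by (simp add: u_def ND_def deriv_nondiff)
  next
    case False
    then have d: "f differentiable (at x)" by (simp add: ND_def)
    show ?thesis using deriv_RQ_lim[OF d] False by (simp add: u_def)
  qed
  have [measurable]: "ND f \<in> sets borel" by (rule ND_borel[OF lip])
  have [measurable]: "f \<in> borel_measurable borel" by (rule borel_measurable_continuous_onI[OF lip_cont[OF lip]])
  show "u n \<in> borel_measurable borel" for n unfolding u_def RQ_def by measurable
qed

lemma deriv_bound:
  fixes f :: "real \<Rightarrow> real" and a b K :: real
  assumes lip: "K-lipschitz_on UNIV f" and d: "f differentiable (at x)"
  shows "\<bar>deriv f x\<bar> \<le> K"
proof -
  have "(\<lambda>n. \<bar>RQ f x (inverse (real (Suc n)))\<bar>) \<longlonglongrightarrow> \<bar>deriv f x\<bar>"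
    by (rule tendsto_rabs[OF deriv_RQ_lim[OF d]])
  then show ?thesis by (rule LIMSEQ_le_const2) (auto intro!: RQ_bound[OF lip])
qed

lemma deriv_bound_all:
  fixes f :: "real \<Rightarrow> real" and a b K :: real
  assumes lip: "K-lipschitz_on UNIV f"
  shows "\<bar>deriv f x\<bar> \<le> max K \<bar>c0\<bar>"
  using deriv_bound[OF lip, of x] deriv_nondiff[of f x] by (cases "f differentiable (at x)") auto

lemma AE_not_ND:
  fixes f :: "real \<Rightarrow> real" and a b K :: real
  assumes lip: "K-lipschitz_on UNIV f"
  shows "AE x in lborel. f differentiable (at x)"
  by (rule AE_I'[OF ND_null_lborel[OF lip]]) (auto simp: ND_def)

lemma interval_to_set: "(a::real) \<le> b \<Longrightarrow> interval_lebesgue_integral lborel (ereal a) (ereal b) g = (LINT x:{a<..<b}|lborel. g x)"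
  by (simp add: interval_lebesgue_integral_def einterval_eq)

lemma ftc_lip:
  fixes f :: "real \<Rightarrow> real" and a b K :: real
  assumes lip: "K-lipschitz_on UNIV f" and ab: "a \<le> b"
  shows "set_integrable lborel {a<..<b} (deriv f)"
    and "(LINT x:{a<..<b}|lborel. deriv f x) = f b - f a"
proof -
  have contf: "continuous_on UNIV f" by (rule lip_cont[OF lip])
  define G where "G u = interval_lebesgue_integral lborel (ereal (a - 1)) (ereal u) f" for u
  have Gd: "(G has_real_derivative f y) (at y)" if y: "a - 1 < y" "y < b + 2" for y
  proof -
    have "(G has_vector_derivative f y) (at y within {a - 1..b + 2})"
      unfolding G_def by (rule interval_integral_FTC2) (use y contf in \<open>auto intro: continuous_on_subset\<close>)
    then show ?thesis using y by (simp add: at_within_Icc_at has_real_derivative_iff_has_vector_derivative)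
  qed
  define h where "h n = inverse (real (Suc n))" for n
  have h0: "0 < h n" "h n \<le> 1" for n by (auto simp: h_def field_simps)
  define s where "s n x = indicator {a<..<b} x *\<^sub>R RQ f x (h n)" for n x
  have int_s: "(LINT x|lborel. s n x) = RQ G b (h n) - RQ G a (h n)" for n
  proof -
    have "interval_lebesgue_integral lborel (ereal a) (ereal b) (\<lambda>x. RQ f x (h n)) = RQ G b (h n) - RQ G a (h n)"
    proof (rule interval_integral_FTC_finite)
      show "continuous_on {min a b..max a b} (\<lambda>x. RQ f x (h n))" unfolding RQ_def
        by (intro continuous_intros continuous_on_compose2[OF contf]) (use h0(1)[of n] in auto)
      fix x assume x: "min a b \<le> x" "x \<le> max a b"
      have d1: "(G has_real_derivative f (x + h n)) (at (x + h n))" by (rule Gd) (use x ab h0[of n] in auto)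
      then have d1': "((\<lambda>x. G (x + h n)) has_real_derivative f (x + h n)) (at x)" by (simp add: DERIV_shift)
      have d2: "(G has_real_derivative f x) (at x)" by (rule Gd) (use x ab in auto)
      have "((\<lambda>x. RQ G x (h n)) has_real_derivative RQ f x (h n)) (at x)"
        unfolding RQ_def by (intro DERIV_cdivide DERIV_diff d1' d2)
      then show "((\<lambda>x. RQ G x (h n)) has_vector_derivative RQ f x (h n)) (at x within {min a b..max a b})"
        by (simp add: has_real_derivative_iff_has_vector_derivative has_vector_derivative_at_within)
    qed
    then show ?thesis using ab by (simp add: interval_to_set s_def set_lebesgue_integral_def)
  qed
  have limG: "(\<lambda>n. RQ G y (h n)) \<longlonglongrightarrow> f y" if "a \<le> y" "y \<le> b" for y
  proof -
    have "(G has_real_derivative f y) (at y)" by (rule Gd) (use that in auto)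
    from deriv_RQ_LQ(1)[OF this] show ?thesis unfolding h_def by (rule filterlim_compose[OF _ hseq])
  qed
  have lim1: "(\<lambda>n. LINT x|lborel. s n x) \<longlonglongrightarrow> f b - f a"
    unfolding int_s using ab by (intro tendsto_diff limG) auto
  have [measurable]: "f \<in> borel_measurable borel" by (rule borel_measurable_continuous_onI[OF contf])
  have [measurable]: "deriv f \<in> borel_measurable borel" by (rule deriv_borel[OF lip])
  have ms: "s n \<in> borel_measurable lborel" for n unfolding s_def RQ_def by measurable
  have mF: "(\<lambda>x. indicator {a<..<b} x *\<^sub>R deriv f x) \<in> borel_measurable lborel" by measurable
  have K0: "K \<ge> 0" using lip by (simp add: lipschitz_on_def)
  have intw: "integrable lborel (\<lambda>x. K * indicator {a<..<b} x)"
    by (intro integrable_mult_right integrable_real_indicator) (use ab in \<open>auto simp: emeasure_lborel_Ioo\<close>)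
  have ae: "AE x in lborel. (\<lambda>n. s n x) \<longlonglongrightarrow> indicator {a<..<b} x *\<^sub>R deriv f x"
    using AE_not_ND[OF lip]
  proof eventually_elim
    case (elim x)
    show ?case unfolding s_def h_def by (intro tendsto_scaleR tendsto_const deriv_RQ_lim elim)
  qed
  have bnd: "AE x in lborel. norm (s n x) \<le> K * indicator {a<..<b} x" for n
    using RQ_bound[OF lip h0(1)[of n]] K0 by (auto simp: s_def indicator_def)
  show "set_integrable lborel {a<..<b} (deriv f)"
    unfolding set_integrable_def by (rule integrable_dominated_convergence[OF mF ms intw ae bnd])
  have "(\<lambda>n. LINT x|lborel. s n x) \<longlonglongrightarrow> (LINT x|lborel. indicator {a<..<b} x *\<^sub>R deriv f x)"
    by (rule integral_dominated_convergence[OF mF ms intw ae bnd])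
  then show "(LINT x:{a<..<b}|lborel. deriv f x) = f b - f a"
    unfolding set_lebesgue_integral_def using lim1 by (rule LIMSEQ_unique)
qed

lemma mvt_bound_lt:
  fixes \<phi> \<phi>' :: "real \<Rightarrow> real"
  assumes d: "\<And>x. (\<phi> has_real_derivative \<phi>' x) (at x)" and b: "\<And>x. u \<le> x \<Longrightarrow> x \<le> v \<Longrightarrow> \<bar>\<phi>' x\<bar> \<le> M"
    and uv: "u < v"
  shows "\<bar>\<phi> v - \<phi> u\<bar> \<le> M * \<bar>v - u\<bar>"
proof -
  obtain z where z: "u < z" "z < v" "\<phi> v - \<phi> u = (v - u) * \<phi>' z" using MVT2[OF uv d] by blast
  have "\<bar>\<phi> v - \<phi> u\<bar> = \<bar>v - u\<bar> * \<bar>\<phi>' z\<bar>" using z(3) by (simp add: abs_mult)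
  also have "\<dots> \<le> \<bar>v - u\<bar> * M" using b[of z] z by (intro mult_left_mono) auto
  finally show ?thesis by (simp add: mult.commute)
qed

lemma mvt_bound:
  fixes \<phi> \<phi>' :: "real \<Rightarrow> real"
  assumes d: "\<And>x. (\<phi> has_real_derivative \<phi>' x) (at x)"
    and b: "\<And>x. min u v \<le> x \<Longrightarrow> x \<le> max u v \<Longrightarrow> \<bar>\<phi>' x\<bar> \<le> M"
  shows "\<bar>\<phi> u - \<phi> v\<bar> \<le> M * \<bar>u - v\<bar>"
proof (cases u v rule: linorder_cases)
  case less
  then show ?thesis using mvt_bound_lt[OF d, of u v M] b by (simp add: abs_minus_commute)
next
  case greater
  then show ?thesis using mvt_bound_lt[OF d, of v u M] b by simp
qed simp

lemma cont_bounded_Icc: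
  fixes \<phi> :: "real \<Rightarrow> real"
  assumes "continuous_on UNIV \<phi>"
  obtains M where "\<And>y. c \<le> y \<Longrightarrow> y \<le> d \<Longrightarrow> \<bar>\<phi> y\<bar> \<le> M"
proof -
  have "compact (\<phi> ` {c..d})" by (rule compact_continuous_image) (use assms in \<open>auto intro: continuous_on_subset\<close>)
  then have "bounded (\<phi> ` {c..d})" by (rule compact_imp_bounded)
  then obtain M where "\<forall>x\<in>\<phi> ` {c..d}. \<bar>x\<bar> \<le> M" unfolding bounded_real by blast
  then have "\<And>y. c \<le> y \<Longrightarrow> y \<le> d \<Longrightarrow> \<bar>\<phi> y\<bar> \<le> M" by auto
  then show ?thesis by (rule that)
qed

lemma deriv_under_int:
  fixes \<phi> \<phi>' w :: "real \<Rightarrow> real" and S :: "real set" and \<alpha> B :: real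
  assumes d\<phi>: "\<And>x. (\<phi> has_real_derivative \<phi>' x) (at x)" and c\<phi>': "continuous_on UNIV \<phi>'"
    and wm: "w \<in> borel_measurable borel" and wb: "\<And>x. \<bar>w x\<bar> \<le> B"
    and Sm: "S \<in> sets borel" and Sf: "emeasure lborel S < \<infinity>"
  shows "((\<lambda>t. LINT x:S|lborel. \<phi> (\<alpha> + t * w x)) has_real_derivative (LINT x:S|lborel. \<phi>' \<alpha> * w x)) (at 0)"
proof -
  have B0: "B \<ge> 0" using wb[of 0] by linarith
  have c\<phi>: "continuous_on UNIV \<phi>"
    using d\<phi> by (auto simp: continuous_on_eq_continuous_at intro: DERIV_isCont)
  obtain M where M: "\<And>y. \<alpha> - B \<le> y \<Longrightarrow> y \<le> \<alpha> + B \<Longrightarrow> \<bar>\<phi>' y\<bar> \<le> M"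
    using cont_bounded_Icc[OF c\<phi>'] by blast
  have M0: "M \<ge> 0" using M[of \<alpha>] B0 by fastforce
  have [measurable]: "\<phi> \<in> borel_measurable borel" by (rule borel_measurable_continuous_onI[OF c\<phi>])
  have [measurable]: "w \<in> borel_measurable borel" by (rule wm)
  have [measurable]: "S \<in> sets borel" by (rule Sm)
  have intI: "integrable lborel (\<lambda>x. indicator S x * C)" for C :: real
    by (rule integrable_mult_left, rule integrable_real_indicator) (use Sm Sf in auto)
  have int_phi: "integrable lborel (\<lambda>x. indicator S x * \<phi> (\<alpha> + t * w x))" for t
  proof -
    obtain C where C: "\<And>y. \<alpha> - \<bar>t\<bar> * B \<le> y \<Longrightarrow> y \<le> \<alpha> + \<bar>t\<bar> * B \<Longrightarrow> \<bar>\<phi> y\<bar> \<le> C"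
      using cont_bounded_Icc[OF c\<phi>] by blast
    have tw: "\<bar>t * w x\<bar> \<le> \<bar>t\<bar> * B" for x using wb[of x] by (simp add: abs_mult mult_left_mono)
    show ?thesis
    proof (rule Bochner_Integration.integrable_bound[OF intI[of C]])
      show "(\<lambda>x. indicator S x * \<phi> (\<alpha> + t * w x)) \<in> borel_measurable lborel" by measurable
      show "AE x in lborel. norm (indicator S x * \<phi> (\<alpha> + t * w x)) \<le> norm (indicator S x * C)"
      proof (rule AE_I2)
        fix x
        have "\<bar>\<phi> (\<alpha> + t * w x)\<bar> \<le> C" using tw[of x] by (intro C) (auto simp: abs_le_iff)
        then show "norm (indicator S x * \<phi> (\<alpha> + t * w x)) \<le> norm (indicator S x * C)"
          by (auto simp: indicator_def)
      qed
    qed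
  qed
  define G where "G t = (LINT x:S|lborel. \<phi> (\<alpha> + t * w x))" for t
  define D where "D = (LINT x:S|lborel. \<phi>' \<alpha> * w x)"
  have quot: "(G t - G 0) / (t - 0) = (LINT x|lborel. indicator S x * ((\<phi> (\<alpha> + t * w x) - \<phi> \<alpha>) / t))" for t
  proof -
    have "(G t - G 0) / (t - 0) = ((LINT x|lborel. indicator S x * \<phi> (\<alpha> + t * w x)) - (LINT x|lborel. indicator S x * \<phi> (\<alpha> + 0 * w x))) / t"
      by (simp add: G_def set_lebesgue_integral_def)
    also have "\<dots> = (LINT x|lborel. indicator S x * \<phi> (\<alpha> + t * w x) - indicator S x * \<phi> (\<alpha> + 0 * w x)) / t"
      by (subst Bochner_Integration.integral_diff[OF int_phi int_phi]) simp
    also have "\<dots> = (LINT x|lborel. (indicator S x * \<phi> (\<alpha> + t * w x) - indicator S x * \<phi> (\<alpha> + 0 * w x)) / t)"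
      by (rule integral_divide_zero[symmetric])
    also have "\<dots> = (LINT x|lborel. indicator S x * ((\<phi> (\<alpha> + t * w x) - \<phi> \<alpha>) / t))"
      by (simp add: right_diff_distrib)
    finally show ?thesis .
  qed
  have ptw: "((\<lambda>t. (\<phi> (\<alpha> + t * w x) - \<phi> \<alpha>) / t) \<longlongrightarrow> \<phi>' \<alpha> * w x) (at 0)" for x
  proof -
    have "((\<lambda>t. \<phi> (\<alpha> + t * w x)) has_real_derivative \<phi>' (\<alpha> + 0 * w x) * w x) (at 0)"
      by (rule DERIV_chain2[OF d\<phi>]) (auto intro!: derivative_eq_intros)
    then show ?thesis by (simp add: has_field_derivative_iff)
  qed
  have bound: "\<bar>(\<phi> (\<alpha> + t * w x) - \<phi> \<alpha>) / t\<bar> \<le> M * B" if t: "\<bar>t\<bar> \<le> 1" "t \<noteq> 0" for t x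
  proof -
    have tw: "\<bar>t * w x\<bar> \<le> B" using wb[of x] t by (simp add: abs_mult) (metis abs_ge_zero mult_le_cancel_right1 order_trans mult.commute mult_left_le_one_le)
    have "\<bar>\<phi> (\<alpha> + t * w x) - \<phi> \<alpha>\<bar> \<le> M * \<bar>(\<alpha> + t * w x) - \<alpha>\<bar>"
      by (rule mvt_bound[OF d\<phi>]) (rule M, use tw in \<open>auto simp: abs_le_iff\<close>)
    also have "\<dots> = M * \<bar>t\<bar> * \<bar>w x\<bar>" by (simp add: abs_mult)
    finally have "\<bar>\<phi> (\<alpha> + t * w x) - \<phi> \<alpha>\<bar> \<le> M * \<bar>t\<bar> * \<bar>w x\<bar>" .
    then have "\<bar>(\<phi> (\<alpha> + t * w x) - \<phi> \<alpha>) / t\<bar> \<le> M * \<bar>w x\<bar>"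
      using t by (simp add: abs_divide divide_le_eq mult_ac)
    also have "\<dots> \<le> M * B" using wb[of x] M0 by (rule mult_left_mono)
    finally show ?thesis .
  qed
  have "((\<lambda>t. (G t - G 0) / (t - 0)) \<longlongrightarrow> D) (at 0)"
    unfolding tendsto_at_iff_sequentially
  proof (intro allI impI)
    fix X :: "nat \<Rightarrow> real" assume X: "\<forall>i. X i \<in> UNIV - {0}" and X0: "X \<longlonglongrightarrow> 0"
    obtain N where N: "\<And>n. n \<ge> N \<Longrightarrow> \<bar>X n\<bar> \<le> 1"
      using X0 unfolding LIMSEQ_def by (metis dist_real_def diff_zero less_imp_le zero_less_one)
    define Y where "Y n = X (n + N)" for n
    have Y1: "\<bar>Y n\<bar> \<le> 1" "Y n \<noteq> 0" for n using N[of "n + N"] X by (auto simp: Y_def)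
    have Y0: "Y \<longlonglongrightarrow> 0" unfolding Y_def by (rule LIMSEQ_ignore_initial_segment[OF X0])
    have Yat: "filterlim Y (at 0) sequentially" by (rule filterlim_atI[OF Y0]) (use Y1 in auto)
    define s where "s n x = indicator S x * ((\<phi> (\<alpha> + Y n * w x) - \<phi> \<alpha>) / Y n)" for n x
    have "(\<lambda>n. LINT x|lborel. s n x) \<longlonglongrightarrow> (LINT x|lborel. indicator S x * (\<phi>' \<alpha> * w x))"
    proof (rule integral_dominated_convergence[where w = "\<lambda>x. indicator S x * (M * B)"])
      show "(\<lambda>x. indicator S x * (\<phi>' \<alpha> * w x)) \<in> borel_measurable lborel" by measurable
      show "s n \<in> borel_measurable lborel" for n unfolding s_def by measurable
      show "integrable lborel (\<lambda>x. indicator S x * (M * B))" by (rule intI)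
      show "AE x in lborel. (\<lambda>n. s n x) \<longlonglongrightarrow> indicator S x * (\<phi>' \<alpha> * w x)"
      proof (rule AE_I2)
        fix x
        have "(\<lambda>n. (\<phi> (\<alpha> + Y n * w x) - \<phi> \<alpha>) / Y n) \<longlonglongrightarrow> \<phi>' \<alpha> * w x"
          by (rule filterlim_compose[OF ptw Yat])
        then show "(\<lambda>n. s n x) \<longlonglongrightarrow> indicator S x * (\<phi>' \<alpha> * w x)"
          unfolding s_def by (intro tendsto_mult tendsto_const)
      qed
      show "AE x in lborel. norm (s n x) \<le> indicator S x * (M * B)" for n
      proof (rule AE_I2)
        fix x
        show "norm (s n x) \<le> indicator S x * (M * B)"
          using bound[OF Y1(1)[of n] Y1(2)[of n], of x] by (auto simp: s_def indicator_def)
      qed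
    qed
    moreover have "(\<lambda>n. (G (Y n) - G 0) / (Y n - 0)) = (\<lambda>n. LINT x|lborel. s n x)"
      by (simp only: quot s_def)
    moreover have "D = (LINT x|lborel. indicator S x * (\<phi>' \<alpha> * w x))"
      unfolding D_def set_lebesgue_integral_def by simp
    ultimately have "(\<lambda>n. (G (Y n) - G 0) / (Y n - 0)) \<longlonglongrightarrow> D" by simp
    then show "((\<lambda>t. (G t - G 0) / (t - 0)) \<circ> X) \<longlonglongrightarrow> D"
      unfolding Y_def o_def by (rule LIMSEQ_offset)
  qed
  then show ?thesis unfolding has_field_derivative_iff G_def D_def by simp
qed

lemma deriv_local:
  fixes f g :: "real \<Rightarrow> real"
  assumes T: "open T" "x \<in> T" and eq: "\<And>y. y \<in> T \<Longrightarrow> f y = g y"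
  shows "deriv f x = deriv g x"
proof -
  have "(f has_field_derivative D) (at x) \<longleftrightarrow> (g has_field_derivative D) (at x)" for D
    unfolding has_field_derivative_def
  proof
    assume "(f has_derivative (*) D) (at x)"
    then show "(g has_derivative (*) D) (at x)" by (rule has_derivative_transform_within_open[OF _ T eq])
  next
    assume "(g has_derivative (*) D) (at x)"
    then show "(f has_derivative (*) D) (at x)" by (rule has_derivative_transform_within_open[OF _ T]) (simp add: eq)
  qed
  then show ?thesis unfolding deriv_def by simp
qed

lemma clamp_lip:
  assumes "L-lipschitz_on {0..real N} v"
  shows "L-lipschitz_on UNIV (\<lambda>x. v (max 0 (min (real N) x)))"
  unfolding lipschitz_on_def
proof (intro conjI ballI)
  show L0: "0 \<le> L" using assms by (simp add: lipschitz_on_def)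
  fix x y :: real
  have "dist (v (max 0 (min (real N) x))) (v (max 0 (min (real N) y))) \<le> L * dist (max 0 (min (real N) x)) (max 0 (min (real N) y))"
    using assms unfolding lipschitz_on_def by auto
  also have "\<dots> \<le> L * dist x y"
    by (intro mult_left_mono L0) (auto simp: dist_real_def max_def min_def)
  finally show "dist (v (max 0 (min (real N) x))) (v (max 0 (min (real N) y))) \<le> L * dist x y" .
qed

lemma lin_lip:
  assumes "L-lipschitz_on UNIV vb"
  shows "(\<bar>F\<bar> + \<bar>t\<bar> * L)-lipschitz_on UNIV (\<lambda>x. F * x + t * vb x)"
  unfolding lipschitz_on_def
proof (intro conjI ballI)
  have L0: "0 \<le> L" using assms by (simp add: lipschitz_on_def)
  then show "0 \<le> \<bar>F\<bar> + \<bar>t\<bar> * L" by simp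
  fix x y :: real
  have v: "\<bar>vb x - vb y\<bar> \<le> L * \<bar>x - y\<bar>" using assms unfolding lipschitz_on_def dist_real_def by auto
  have "\<bar>(F * x + t * vb x) - (F * y + t * vb y)\<bar> = \<bar>F * (x - y) + t * (vb x - vb y)\<bar>" by (simp add: algebra_simps)
  also have "\<dots> \<le> \<bar>F\<bar> * \<bar>x - y\<bar> + \<bar>t\<bar> * \<bar>vb x - vb y\<bar>" by (metis abs_mult abs_triangle_ineq)
  also have "\<dots> \<le> \<bar>F\<bar> * \<bar>x - y\<bar> + \<bar>t\<bar> * (L * \<bar>x - y\<bar>)" using v by (intro add_left_mono mult_left_mono) auto
  finally show "dist (F * x + t * vb x) (F * y + t * vb y) \<le> (\<bar>F\<bar> + \<bar>t\<bar> * L) * dist x y"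
    by (simp add: dist_real_def algebra_simps)
qed

lemma exact_bond_deriv:
  fixes \<phi> \<phi>' v :: "real \<Rightarrow> real"
  assumes d\<phi>: "\<And>x. (\<phi> has_real_derivative \<phi>' x) (at x)"
  shows "((\<lambda>t. e_bond \<phi> (\<lambda>x. F * x + t * v x) b) has_real_derivative
      \<phi>' (F * real (snd b)) * (v (real_of_int (fst b) + real (snd b)) - v (real_of_int (fst b)))) (at 0)"
proof -
  define i where "i = real_of_int (fst b)"
  define r where "r = real (snd b)"
  have "((\<lambda>t. \<phi> ((F * (i + r) + t * v (i + r)) - (F * i + t * v i))) has_real_derivative
      \<phi>' ((F * (i + r) + 0 * v (i + r)) - (F * i + 0 * v i)) * (v (i + r) - v i)) (at 0)"
    by (rule DERIV_chain2[OF d\<phi>]) (auto intro!: derivative_eq_intros)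
  moreover have "(F * (i + r) + 0 * v (i + r)) - (F * i + 0 * v i) = F * r" by (simp add: algebra_simps)
  ultimately show ?thesis by (simp add: e_bond_def i_def r_def)
qed

lemma cont_bond_range:
  assumes b: "b \<in> bonds N R" "bond_set b \<subseteq> Omega_c N"
  shows "0 \<le> fst b" "fst b + int (snd b) \<le> int N" "1 \<le> snd b"
proof -
  obtain i r where ir: "b = (i, r)" by (cases b)
  have r1: "1 \<le> r" using b(1) by (simp add: bonds_def ir)
  then show "1 \<le> snd b" by (simp add: ir)
  have sub: "{real_of_int i<..<real_of_int i + real r} \<subseteq> {0<..<real N}"
    using b(2) by (simp add: bond_set_def Omega_c_def ir)
  show "0 \<le> fst b"
  proof (rule ccontr)
    assume "\<not> 0 \<le> fst b"
    then have "i \<le> -1" by (simp add: ir)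
    then have ri: "real_of_int i \<le> -1" by simp
    have "real_of_int i + 1/2 \<in> {real_of_int i<..<real_of_int i + real r}" using r1 by auto
    then have "real_of_int i + 1/2 \<in> {0<..<real N}" using sub by blast
    then show False using ri by simp
  qed
  show "fst b + int (snd b) \<le> int N"
  proof (rule ccontr)
    assume "\<not> fst b + int (snd b) \<le> int N"
    then have "i + int r \<ge> int N + 1" by (simp add: ir)
    then have "real_of_int (i + int r) \<ge> real_of_int (int N + 1)" by (simp only: of_int_le_iff)
    then have ri: "real_of_int i + real r \<ge> real N + 1" by simp
    have "real_of_int i + real r - 1/2 \<in> {real_of_int i<..<real_of_int i + real r}" using r1 by auto
    then have "real_of_int i + real r - 1/2 \<in> {0<..<real N}" using sub by blast
    then show False using ri by simp
  qed
qed

lemma cont_bond_deriv: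
  fixes \<phi> \<phi>' v :: "real \<Rightarrow> real"
  assumes d\<phi>: "\<And>x. (\<phi> has_real_derivative \<phi>' x) (at x)" and c\<phi>': "continuous_on UNIV \<phi>'"
    and lip: "L-lipschitz_on {0..real N} v"
    and b: "b \<in> bonds N R" "bond_set b \<subseteq> Omega_c N"
  shows "((\<lambda>t. c_bond \<phi> N (\<lambda>x. F * x + t * v x) b) has_real_derivative
      \<phi>' (F * real (snd b)) * (v (real_of_int (fst b) + real (snd b)) - v (real_of_int (fst b)))) (at 0)"
proof -
  obtain i r where ir: "b = (i, r)" by (cases b)
  have i0: "0 \<le> i" and iN: "i + int r \<le> int N" and r1: "1 \<le> r" using cont_bond_range[OF b] by (auto simp: ir)
  define S where "S = {real_of_int i<..<real_of_int i + real r}"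
  have bS: "bond_set b = S" by (simp add: bond_set_def S_def ir)
  have SO: "S \<subseteq> {0<..<real N}" using b(2) by (simp add: bS Omega_c_def)
  have bSO: "bond_set b \<inter> Omega_c N = S" using b(2) bS by auto
  define vb where "vb = (\<lambda>x. v (max 0 (min (real N) x)))"
  have lipb: "L-lipschitz_on UNIV vb" unfolding vb_def by (rule clamp_lip[OF lip])
  have L0: "L \<ge> 0" using lip by (simp add: lipschitz_on_def)
  have eqv: "v x = vb x" if "0 \<le> x" "x \<le> real N" for x using that by (simp add: vb_def)
  have c\<phi>: "continuous_on UNIV \<phi>"
    using d\<phi> by (auto simp: continuous_on_eq_continuous_at intro: DERIV_isCont)
  have [measurable]: "\<phi> \<in> borel_measurable borel" by (rule borel_measurable_continuous_onI[OF c\<phi>])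
  have [measurable]: "deriv vb \<in> borel_measurable borel" by (rule deriv_borel[OF lipb])
  have Sm[measurable]: "S \<in> sets borel" by (simp add: S_def)
  have rr: "real r > 0" using r1 by simp
  have step1: "c_bond \<phi> N (\<lambda>x. F * x + t * v x) b =
      (1 / real r) * (LINT x:S|lborel. \<phi> (real r * F + t * (real r * deriv vb x)))" for t
  proof -
    have "(LINT x:S|lborel. \<phi> (real r * deriv (\<lambda>x. F * x + t * v x) x)) =
          (LINT x:S|lborel. \<phi> (real r * deriv (\<lambda>x. F * x + t * vb x) x))"
    proof (rule set_lebesgue_integral_cong)
      show "S \<in> sets lborel" by simp
      show "\<forall>x. x \<in> S \<longrightarrow> \<phi> (real r * deriv (\<lambda>x. F * x + t * v x) x) = \<phi> (real r * deriv (\<lambda>x. F * x + t * vb x) x)"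
      proof (intro allI impI)
        fix x assume "x \<in> S"
        then have "x \<in> {0<..<real N}" using SO by blast
        then have "deriv (\<lambda>x. F * x + t * v x) x = deriv (\<lambda>x. F * x + t * vb x) x"
          by (rule deriv_local[OF open_greaterThanLessThan]) (simp add: eqv)
        then show "\<phi> (real r * deriv (\<lambda>x. F * x + t * v x) x) = \<phi> (real r * deriv (\<lambda>x. F * x + t * vb x) x)" by simp
      qed
    qed
    also have "\<dots> = (LINT x:S|lborel. \<phi> (real r * F + t * (real r * deriv vb x)))"
    proof (rule set_lebesgue_integral_cong_AE)
      show "S \<in> sets lborel" by simp
      have [measurable]: "deriv (\<lambda>x. F * x + t * vb x) \<in> borel_measurable borel"
        by (rule deriv_borel[OF lin_lip[OF lipb]])
      show "(\<lambda>x. \<phi> (real r * deriv (\<lambda>x. F * x + t * vb x) x)) \<in> borel_measurable lborel" by measurable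
      show "(\<lambda>x. \<phi> (real r * F + t * (real r * deriv vb x))) \<in> borel_measurable lborel" by measurable
      show "AE x\<in>S in lborel. \<phi> (real r * deriv (\<lambda>x. F * x + t * vb x) x) = \<phi> (real r * F + t * (real r * deriv vb x))"
        using AE_not_ND[OF lipb]
      proof eventually_elim
        case (elim x)
        have "(vb has_real_derivative deriv vb x) (at x)" using elim DERIV_deriv_iff_real_differentiable by blast
        then have "((\<lambda>x. F * x + t * vb x) has_real_derivative F + t * deriv vb x) (at x)"
          by (auto intro!: derivative_eq_intros)
        then have "deriv (\<lambda>x. F * x + t * vb x) x = F + t * deriv vb x" by (rule DERIV_imp_deriv)
        then show ?case by (simp add: algebra_simps)
      qed
    qed
    finally show ?thesis by (simp add: c_bond_def ir bSO[unfolded ir])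
  qed
  have wb: "\<bar>real r * deriv vb x\<bar> \<le> real r * max L \<bar>c0\<bar>" for x
    using deriv_bound_all[OF lipb, of x] rr by (simp add: abs_mult)
  have Sf: "emeasure lborel S < \<infinity>" by (simp add: S_def emeasure_lborel_Ioo)
  have D1: "((\<lambda>t. LINT x:S|lborel. \<phi> (real r * F + t * (real r * deriv vb x))) has_real_derivative
      (LINT x:S|lborel. \<phi>' (real r * F) * (real r * deriv vb x))) (at 0)"
    by (rule deriv_under_int[OF d\<phi> c\<phi>' _ wb Sm Sf]) measurable
  have D2: "((\<lambda>t. c_bond \<phi> N (\<lambda>x. F * x + t * v x) b) has_real_derivative
      (1 / real r) * (LINT x:S|lborel. \<phi>' (real r * F) * (real r * deriv vb x))) (at 0)"
    unfolding step1 by (rule DERIV_cmult[OF D1])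
  have ab: "real_of_int i \<le> real_of_int i + real r" by simp
  have "(LINT x:S|lborel. \<phi>' (real r * F) * (real r * deriv vb x)) = (\<phi>' (real r * F) * real r) * (LINT x:S|lborel. deriv vb x)"
    by (simp add: mult.assoc set_integral_mult_right)
  also have "(LINT x:S|lborel. deriv vb x) = vb (real_of_int i + real r) - vb (real_of_int i)"
    unfolding S_def by (rule ftc_lip(2)[OF lipb ab])
  also have "vb (real_of_int i + real r) = v (real_of_int i + real r)"
  proof -
    have "real_of_int (i + int r) \<le> real_of_int (int N)" using iN by (simp only: of_int_le_iff)
    then have "real_of_int i + real r \<le> real N" by simp
    then show ?thesis using i0 by (intro eqv[symmetric]) auto
  qed
  also have "vb (real_of_int i) = v (real_of_int i)"
  proof -
    have "real_of_int (i + int r) \<le> real_of_int (int N)" using iN by (simp only: of_int_le_iff)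
    then have "real_of_int i \<le> real N" by simp
    then show ?thesis using i0 by (intro eqv[symmetric]) auto
  qed
  finally have val: "(1 / real r) * (LINT x:S|lborel. \<phi>' (real r * F) * (real r * deriv vb x)) =
      \<phi>' (F * real r) * (v (real_of_int i + real r) - v (real_of_int i))"
    using rr by (simp add: mult.commute)
  show ?thesis using D2 unfolding val by (simp add: ir)
qed

lemma bond_sum_zero:
  fixes u :: "int \<Rightarrow> real" and c :: "nat \<Rightarrow> real"
  assumes dir: "\<And>j. j \<in> dirichlet_sites N R \<Longrightarrow> u j = 0"
  shows "(\<Sum>b\<in>bonds N R. c (snd b) * (u (fst b + int (snd b)) - u (fst b))) = 0"
proof -
  define M where "M = int N + int R"
  define A where "A r = {i::int. \<bar>i\<bar> < M \<and> \<bar>i + int r\<bar> < M}" for r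
  define Z where "Z = {j::int. \<bar>j\<bar> < int N}"
  have finA: "finite (A r)" for r
    by (rule finite_subset[of _ "{-M..M}"]) (auto simp: A_def)
  have finZ: "finite Z" by (rule finite_subset[of _ "{-int N..int N}"]) (auto simp: Z_def)
  have bonds_eq: "bonds N R = (\<lambda>(r, i). (i, r)) ` (SIGMA r:{1..R}. A r)"
    by (auto simp: bonds_def sites_def A_def M_def image_iff)
  have inj: "inj_on (\<lambda>(r::nat, i::int). (i, r)) (SIGMA r:{1..R}. A r)" by (auto simp: inj_on_def)
  have inner: "(\<Sum>i\<in>A r. c r * (u (i + int r) - u i)) = 0" if r: "1 \<le> r" "r \<le> R" for r
  proof -
    have s1: "(\<Sum>i\<in>A r. u i) = (\<Sum>j\<in>Z. u j)"
    proof (rule sum.mono_neutral_right[OF finA])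
      show "Z \<subseteq> A r" using r by (auto simp: Z_def A_def M_def)
      show "\<forall>i\<in>A r - Z. u i = 0" by (auto simp: Z_def A_def M_def dirichlet_sites_def intro!: dir)
    qed
    have s2: "(\<Sum>i\<in>A r. u (i + int r)) = (\<Sum>j\<in>(\<lambda>i. i + int r) ` A r. u j)"
      by (subst sum.reindex) (auto simp: inj_on_def)
    also have "\<dots> = (\<Sum>j\<in>Z. u j)"
    proof (rule sum.mono_neutral_right)
      show "finite ((\<lambda>i. i + int r) ` A r)" using finA by simp
      show "Z \<subseteq> (\<lambda>i. i + int r) ` A r"
      proof
        fix j assume "j \<in> Z"
        then have "j - int r \<in> A r" using r by (auto simp: Z_def A_def M_def)
        then show "j \<in> (\<lambda>i. i + int r) ` A r" by (rule rev_image_eqI) simp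
      qed
      show "\<forall>i\<in>(\<lambda>i. i + int r) ` A r - Z. u i = 0"
        by (auto simp: Z_def A_def M_def dirichlet_sites_def intro!: dir)
    qed
    finally have "(\<Sum>i\<in>A r. u (i + int r)) = (\<Sum>j\<in>Z. u j)" .
    then show ?thesis using s1 by (simp add: sum_distrib_left[symmetric] sum_subtractf)
  qed
  have "(\<Sum>b\<in>bonds N R. c (snd b) * (u (fst b + int (snd b)) - u (fst b)))
      = (\<Sum>p\<in>(SIGMA r:{1..R}. A r). c (fst p) * (u (snd p + int (fst p)) - u (snd p)))"
    unfolding bonds_eq by (subst sum.reindex[OF inj]) (simp add: case_prod_beta o_def)
  also have "\<dots> = (\<Sum>r\<in>{1..R}. \<Sum>i\<in>A r. c r * (u (i + int r) - u i))"
    using sum.Sigma[of "{1..R}" A "\<lambda>r i. c r * (u (i + int r) - u i)"] finA by (simp add: case_prod_beta)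
  also have "\<dots> = 0" using inner by simp
  finally show ?thesis .
qed

theorem proposition3p2:
  fixes N R :: nat and \<phi> \<phi>' :: "real \<Rightarrow> real" and F :: real and v :: "real \<Rightarrow> real"
  assumes "N \<ge> 1" and "R \<ge> 1"
    and "\<And>x. (\<phi> has_real_derivative \<phi>' x) (at x)" and "continuous_on UNIV \<phi>'"
    and "F > 0" and "v \<in> adm0 N R"
  shows "((\<lambda>t. E_ecc \<phi> N R (\<lambda>x. F * x + t * v x)) has_real_derivative 0) (at 0)"
proof -
  note d\<phi> = assms(3) and c\<phi>' = assms(4)
  obtain L where lip: "L-lipschitz_on {0..real N} v" using assms(6) by (auto simp: adm0_def adm_def)
  have dir: "\<And>i. i \<in> dirichlet_sites N R \<Longrightarrow> v (real_of_int i) = 0" using assms(6) by (auto simp: adm0_def)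
  define \<Phi> where "\<Phi> b = \<phi>' (F * real (snd b)) * (v (real_of_int (fst b) + real (snd b)) - v (real_of_int (fst b)))" for b
  define Bex where "Bex = {b \<in> bonds N R. \<not> bond_set b \<subseteq> Omega_c N}"
  define Bc where "Bc = {b \<in> bonds N R. bond_set b \<subseteq> Omega_c N}"
  have finB: "finite (bonds N R)"
    by (rule finite_subset[of _ "{-(int N + int R)..int N + int R} \<times> {0..R}"]) (auto simp: bonds_def sites_def)
  have "((\<lambda>t. E_ecc \<phi> N R (\<lambda>x. F * x + t * v x)) has_real_derivative (\<Sum>b\<in>Bex. \<Phi> b) + (\<Sum>b\<in>Bc. \<Phi> b)) (at 0)"
    unfolding E_ecc_def Bex_def[symmetric] Bc_def[symmetric]
  proof (intro DERIV_add DERIV_sum)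
    fix b assume "b \<in> Bex"
    show "((\<lambda>t. e_bond \<phi> (\<lambda>x. F * x + t * v x) b) has_real_derivative \<Phi> b) (at 0)"
      unfolding \<Phi>_def by (rule exact_bond_deriv[OF d\<phi>])
  next
    fix b assume "b \<in> Bc"
    then have b: "b \<in> bonds N R" "bond_set b \<subseteq> Omega_c N" by (auto simp: Bc_def)
    show "((\<lambda>t. c_bond \<phi> N (\<lambda>x. F * x + t * v x) b) has_real_derivative \<Phi> b) (at 0)"
      unfolding \<Phi>_def by (rule cont_bond_deriv[OF d\<phi> c\<phi>' lip b])
  qed
  moreover have "(\<Sum>b\<in>Bex. \<Phi> b) + (\<Sum>b\<in>Bc. \<Phi> b) = (\<Sum>b\<in>bonds N R. \<Phi> b)"
  proof -
    have "bonds N R = Bex \<union> Bc" "Bex \<inter> Bc = {}" by (auto simp: Bex_def Bc_def)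
    moreover have "finite Bex" "finite Bc" using finB by (auto simp: Bex_def Bc_def)
    ultimately show ?thesis by (simp add: sum.union_disjoint)
  qed
  moreover have "(\<Sum>b\<in>bonds N R. \<Phi> b) = 0"
  proof -
    define u where "u j = v (real_of_int j)" for j
    define c where "c r = \<phi>' (F * real r)" for r
    have "\<Phi> b = c (snd b) * (u (fst b + int (snd b)) - u (fst b))" for b
      by (simp add: \<Phi>_def c_def u_def)
    then have "(\<Sum>b\<in>bonds N R. \<Phi> b) = (\<Sum>b\<in>bonds N R. c (snd b) * (u (fst b + int (snd b)) - u (fst b)))"
      by simp
    also have "\<dots> = 0" by (rule bond_sum_zero) (simp add: u_def dir)
    finally show ?thesis .
  qed
  ultimately show ?thesis by simp
qed

end
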